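(* For every CFTR program $\mathtt{p}$ there is a polynomial $\pi$ such that for every input $x\in\{0,1\}^*$ on which $\mathtt{p}$ terminates, $\mathit{time}_{\mathtt{p}}(x) \le \pi(|x|)$.
   Context: CF ("cons-free") is a first-order, call-by-value functional language over booleans and bit lists $\{0,1\}^*$. A program is a finite sequence of mutually recursive function definitions $\mathtt{f\ x1 \dots xm = e}$ ($m\ge0$), the first being a one-argument entry function. Expressions are $\mathtt{True}$, $\mathtt{False}$, $\mathtt{[]}$, variables, base calls $\mathtt{not\ e}$, $\mathtt{null\ e}$, $\mathtt{head\ e}$, $\mathtt{tail\ e}$, conditionals $\mathtt{if\ e_0\ then\ e_1\ else\ e_2}$, and calls $\mathtt{f\ e_1\dots e_m}$ of defined functions; there are no list constructors. Semantics is standard big-step call-by-value evaluation given by inference rules deriving $\mathtt{p},\rho\vdash\mathtt{e}\to v$; the derivation tree for the run on input $x$ is the computation tree $\mathcal{T}^{\mathtt{p},x}$, and the native running time $\mathit{time}_{\mathtt{p}}(x)$ is the number of nodes of $\mathcal{T}^{\mathtt{p},x}$. Tail form is defined via $\alpha:\mathrm{Exp}\to\{X,T,N\}$ with order $X<T<N$: $\alpha(\text{constant or variable})=X$; $\alpha(\mathtt{base\ e})=X$ if $\alpha(\mathtt{e})=X$, else $N$; $\alpha(\mathtt{f\ e_1\dots e_m})=T$ if all $\alpha(\mathtt{e_i})=X$, else $N$; $\alpha(\mathtt{if\ e_0\ then\ e_1\ else\ e_2})=\max(\alpha(\mathtt{e_1}),\alpha(\mathtt{e_2}))$ if $\alpha(\mathtt{e_0})=X$,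 else $N$. A CFTR program is a CF program in which every function definition $\mathtt{f\ x1\dots xm=e}$ has $\alpha(\mathtt{e})\in\{X,T\}$. *)

theory Defs
  imports "HOL-Computational_Algebra.Polynomial"
begin

text \<open>Values: booleans and bit lists (bit 1 is represented by True, 0 by False).\<close>
datatype val = VBool bool | VList "bool list"

text \<open>Variables are referred to by their position in the parameter list of the
  enclosing definition; defined functions by their position in the program.\<close>
datatype exp =
    ETrue | EFalse | ENil
  | EVar nat
  | ENot exp | ENull exp | EHead exp | ETail exp
  | EIf exp exp exp
  | ECall nat "exp list"

text \<open>A program is a list of definitions; each definition is (arity m, body e).
  The first definition is the entry function.\<close>
type_synonym prog = "(nat \<times> exp) list"

fun wf_exp :: "prog \<Rightarrow> nat \<Rightarrow> exp \<Rightarrow> bool" where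
  "wf_exp p m ETrue = True"
| "wf_exp p m EFalse = True"
| "wf_exp p m ENil = True"
| "wf_exp p m (EVar i) = (i < m)"
| "wf_exp p m (ENot e) = wf_exp p m e"
| "wf_exp p m (ENull e) = wf_exp p m e"
| "wf_exp p m (EHead e) = wf_exp p m e"
| "wf_exp p m (ETail e) = wf_exp p m e"
| "wf_exp p m (EIf e0 e1 e2) = (wf_exp p m e0 \<and> wf_exp p m e1 \<and> wf_exp p m e2)"
| "wf_exp p m (ECall f es) =
     (f < length p \<and> length es = fst (p ! f) \<and> (\<forall>e\<in>set es. wf_exp p m e))"

definition wf_prog :: "prog \<Rightarrow> bool" where
  "wf_prog p \<longleftrightarrow> p \<noteq> [] \<and> fst (p ! 0) = 1 \<and>
     (\<forall>d\<in>set p. wf_exp p (fst d) (snd d))"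

text \<open>eval p rho e v t: the judgment p,\<rho> |- e -> v is derivable, and its
  (unique) derivation tree has exactly t nodes.  evals handles the argument
  list of a call (t = total number of nodes of the argument subtrees).\<close>
inductive eval :: "prog \<Rightarrow> val list \<Rightarrow> exp \<Rightarrow> val \<Rightarrow> nat \<Rightarrow> bool"
  and evals :: "prog \<Rightarrow> val list \<Rightarrow> exp list \<Rightarrow> val list \<Rightarrow> nat \<Rightarrow> bool"
  for p :: prog where
  ev_true: "eval p \<rho> ETrue (VBool True) 1"
| ev_false: "eval p \<rho> EFalse (VBool False) 1"
| ev_nil: "eval p \<rho> ENil (VList []) 1"
| ev_var: "i < length \<rho> \<Longrightarrow> eval p \<rho> (EVar i) (\<rho> ! i) 1"
| ev_not: "eval p \<rho> e (VBool b) t \<Longrightarrow> eval p \<rho> (ENot e) (VBool (\<not> b)) (t + 1)"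
| ev_null: "eval p \<rho> e (VList xs) t \<Longrightarrow> eval p \<rho> (ENull e) (VBool (xs = [])) (t + 1)"
| ev_head: "eval p \<rho> e (VList (b # xs)) t \<Longrightarrow> eval p \<rho> (EHead e) (VBool b) (t + 1)"
| ev_tail: "eval p \<rho> e (VList (b # xs)) t \<Longrightarrow> eval p \<rho> (ETail e) (VList xs) (t + 1)"
| ev_if_true: "eval p \<rho> e0 (VBool True) t0 \<Longrightarrow> eval p \<rho> e1 v t1 \<Longrightarrow>
      eval p \<rho> (EIf e0 e1 e2) v (t0 + t1 + 1)"
| ev_if_false: "eval p \<rho> e0 (VBool False) t0 \<Longrightarrow> eval p \<rho> e2 v t2 \<Longrightarrow>
      eval p \<rho> (EIf e0 e1 e2) v (t0 + t2 + 1)"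
| ev_call: "f < length p \<Longrightarrow> length es = fst (p ! f) \<Longrightarrow> evals p \<rho> es vs t1 \<Longrightarrow>
      eval p vs (snd (p ! f)) v t2 \<Longrightarrow> eval p \<rho> (ECall f es) v (t1 + t2 + 1)"
| evs_nil: "evals p \<rho> [] [] 0"
| evs_cons: "eval p \<rho> e v t \<Longrightarrow> evals p \<rho> es vs ts \<Longrightarrow>
      evals p \<rho> (e # es) (v # vs) (t + ts)"

text \<open>The run of p on input x: the body of the entry function evaluated with its
  single parameter bound to x; time_p(x) = t is the size of the computation tree.\<close>
definition run :: "prog \<Rightarrow> bool list \<Rightarrow> val \<Rightarrow> nat \<Rightarrow> bool" where
  "run p x v t \<longleftrightarrow> eval p [VList x] (snd (p ! 0)) v t"

datatype tf = X | T | N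

fun tf_rank :: "tf \<Rightarrow> nat" where
  "tf_rank X = 0" | "tf_rank T = 1" | "tf_rank N = 2"

definition tf_max :: "tf \<Rightarrow> tf \<Rightarrow> tf" where
  "tf_max a b = (if tf_rank a \<le> tf_rank b then b else a)"

fun alpha :: "exp \<Rightarrow> tf" where
  "alpha ETrue = X"
| "alpha EFalse = X"
| "alpha ENil = X"
| "alpha (EVar i) = X"
| "alpha (ENot e) = (if alpha e = X then X else N)"
| "alpha (ENull e) = (if alpha e = X then X else N)"
| "alpha (EHead e) = (if alpha e = X then X else N)"
| "alpha (ETail e) = (if alpha e = X then X else N)"
| "alpha (ECall f es) = (if (\<forall>e\<in>set es. alpha e = X) then T else N)"
| "alpha (EIf e0 e1 e2) = (if alpha e0 = X then tf_max (alpha e1) (alpha e2) else N)"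

definition CFTR :: "prog \<Rightarrow> bool" where
  "CFTR p \<longleftrightarrow> wf_prog p \<and> (\<forall>d\<in>set p. alpha (snd d) \<in> {X, T})"

end

theory Submission
  imports Defs
begin

inductive_cases evE_true: "eval p r ETrue v t"
inductive_cases evE_false: "eval p r EFalse v t"
inductive_cases evE_nil: "eval p r ENil v t"
inductive_cases evE_var: "eval p r (EVar i) v t"
inductive_cases evE_not: "eval p r (ENot e) v t"
inductive_cases evE_null: "eval p r (ENull e) v t"
inductive_cases evE_head: "eval p r (EHead e) v t"
inductive_cases evE_tail: "eval p r (ETail e) v t"
inductive_cases evE_if: "eval p r (EIf e0 e1 e2) v t"
inductive_cases evE_call: "eval p r (ECall f es) v t"
inductive_cases evsE_nil: "evals p r [] vs t"
inductive_cases evsE_cons: "evals p r (e # es) vs t"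

lemma eval_det:
  "eval p r e v t \<Longrightarrow> (\<forall>v' t'. eval p r e v' t' \<longrightarrow> v' = v \<and> t' = t)"
  "evals p r es vs t \<Longrightarrow> (\<forall>vs' t'. evals p r es vs' t' \<longrightarrow> vs' = vs \<and> t' = t)"
proof (induction rule: eval_evals.inducts)
  case (ev_true r)
  then show ?case by (auto elim: evE_true)
next
  case (ev_false r)
  then show ?case by (auto elim: evE_false)
next
  case (ev_nil r)
  then show ?case by (auto elim: evE_nil)
next
  case (ev_var i r)
  then show ?case by (auto elim: evE_var)
next
  case (ev_not r e b t)
  show ?case
  proof (intro allI impI)
    fix v' t' assume "eval p r (ENot e) v' t'"
    then show "v' = VBool (\<not> b) \<and> t' = t + 1"
      by (rule evE_not) (use ev_not.IH in fastforce)
  qed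
next
  case (ev_null r e xs t)
  show ?case
  proof (intro allI impI)
    fix v' t' assume "eval p r (ENull e) v' t'"
    then show "v' = VBool (xs = []) \<and> t' = t + 1"
      by (rule evE_null) (use ev_null.IH in fastforce)
  qed
next
  case (ev_head r e b xs t)
  show ?case
  proof (intro allI impI)
    fix v' t' assume "eval p r (EHead e) v' t'"
    then show "v' = VBool b \<and> t' = t + 1"
      by (rule evE_head) (use ev_head.IH in fastforce)
  qed
next
  case (ev_tail r e b xs t)
  show ?case
  proof (intro allI impI)
    fix v' t' assume "eval p r (ETail e) v' t'"
    then show "v' = VList xs \<and> t' = t + 1"
      by (rule evE_tail) (use ev_tail.IH in fastforce)
  qed
next
  case (ev_if_true r e0 t0 e1 v t1 e2)
  show ?case
  proof (intro allI impI)
    fix v' t' assume "eval p r (EIf e0 e1 e2) v' t'"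
    then show "v' = v \<and> t' = t0 + t1 + 1"
    proof (rule evE_if)
      fix t0' t1' assume a: "t' = Suc (t0' + t1')" "eval p r e0 (VBool True) t0'" "eval p r e1 v' t1'"
      then have "t0' = t0" using ev_if_true by blast
      moreover have "v' = v \<and> t1' = t1" using a ev_if_true by blast
      ultimately show ?thesis using a by simp
    next
      fix t0' t2' assume a: "t' = Suc (t0' + t2')" "eval p r e0 (VBool False) t0'"
      then show ?thesis using ev_if_true by blast
    qed
  qed
next
  case (ev_if_false r e0 t0 e2 v t2 e1)
  show ?case
  proof (intro allI impI)
    fix v' t' assume "eval p r (EIf e0 e1 e2) v' t'"
    then show "v' = v \<and> t' = t0 + t2 + 1"
    proof (rule evE_if)
      fix t0' t2' assume a: "t' = Suc (t0' + t2')" "eval p r e0 (VBool False) t0'" "eval p r e2 v' t2'"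
      then have "t0' = t0" using ev_if_false by blast
      moreover have "v' = v \<and> t2' = t2" using a ev_if_false by blast
      ultimately show ?thesis using a by simp
    next
      fix t0' t1' assume a: "t' = Suc (t0' + t1')" "eval p r e0 (VBool True) t0'"
      then show ?thesis using ev_if_false by blast
    qed
  qed
next
  case (ev_call f es r vs t1 v t2)
  have ih1: "\<forall>vs' t'. evals p r es vs' t' \<longrightarrow> vs' = vs \<and> t' = t1" using ev_call by blast
  have ih2: "\<forall>v' t'. eval p vs (snd (p ! f)) v' t' \<longrightarrow> v' = v \<and> t' = t2" using ev_call by blast
  show ?case
  proof (intro allI impI)
    fix v' t' assume "eval p r (ECall f es) v' t'"
    then show "v' = v \<and> t' = t1 + t2 + 1"
    proof (rule evE_call)
      fix vs' t1' t2' assume a: "t' = Suc (t1' + t2')" "evals p r es vs' t1'"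
        "eval p vs' (snd (p ! f)) v' t2'"
      from ih1 a(2) have b: "vs' = vs" "t1' = t1" by blast+
      from ih2 a(3) b(1) have "v' = v" "t2' = t2" by blast+
      with a b show ?thesis by simp
    qed
  qed
next
  case (evs_nil r)
  then show ?case by (auto elim: evsE_nil)
next
  case (evs_cons r e v t es vs ts)
  show ?case
  proof (intro allI impI)
    fix vs' t' assume "evals p r (e # es) vs' t'"
    then show "vs' = v # vs \<and> t' = t + ts"
      by (rule evsE_cons) (use evs_cons.IH in fastforce)
  qed
qed


definition G :: "bool list \<Rightarrow> val set" where
  "G x = range VBool \<union> (\<lambda>n. VList (drop n x)) ` {0..length x}"

lemma G_nil: "VList [] \<in> G x"
  unfolding G_def by (auto intro!: image_eqI[where x="length x"])

lemma G_tail: "VList (b # xs) \<in> G x \<Longrightarrow> VList xs \<in> G x"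
proof -
  assume "VList (b # xs) \<in> G x"
  then obtain n where n: "n \<le> length x" "drop n x = b # xs" unfolding G_def by auto
  then have "n < length x" by (metis drop_all list.distinct(1) not_le_imp_less)
  moreover have "drop (Suc n) x = xs" using n by (metis drop_Suc list.sel(3) tl_drop)
  ultimately show ?thesis unfolding G_def by (auto intro!: image_eqI[where x="Suc n"])
qed

lemma G_bool: "VBool b \<in> G x"
  unfolding G_def by auto

lemma eval_good:
  "eval p r e v t \<Longrightarrow> set r \<subseteq> G x \<Longrightarrow> v \<in> G x"
  "evals p r es vs t \<Longrightarrow> set r \<subseteq> G x \<Longrightarrow> set vs \<subseteq> G x"
proof (induction rule: eval_evals.inducts)
  case (ev_nil r) then show ?case by (simp add: G_nil)
next
  case (ev_var i r) then show ?case by (meson nth_mem subsetD)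
next
  case (ev_tail r e b xs t) then show ?case using G_tail by blast
qed (auto simp: G_bool)

lemma evals_length: "evals p r es vs t \<Longrightarrow> length vs = length es"
  by (induction es arbitrary: vs t) (auto elim: evsE_nil evsE_cons)

fun esz :: "exp \<Rightarrow> nat" where
  "esz ETrue = 1"
| "esz EFalse = 1"
| "esz ENil = 1"
| "esz (EVar i) = 1"
| "esz (ENot e) = esz e + 1"
| "esz (ENull e) = esz e + 1"
| "esz (EHead e) = esz e + 1"
| "esz (ETail e) = esz e + 1"
| "esz (EIf e0 e1 e2) = esz e0 + esz e1 + esz e2 + 1"
| "esz (ECall f es) = sum_list (map esz es) + 1"

lemma tf_max_X: "tf_max a b = X \<longleftrightarrow> a = X \<and> b = X"
  by (cases a; cases b; simp add: tf_max_def)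

lemma tf_max_T: "tf_max a b = T \<Longrightarrow> a \<noteq> N \<and> b \<noteq> N"
  by (cases a; cases b; simp add: tf_max_def)

lemma tf_cases: "a \<noteq> N \<Longrightarrow> a = X \<or> a = T"
  by (cases a) auto

definition tailok :: "prog \<Rightarrow> bool list \<Rightarrow> exp \<Rightarrow> val \<Rightarrow> nat \<Rightarrow> bool" where
  "tailok p x e v t \<longleftrightarrow> t \<le> esz e \<or> (\<exists>g vs t'. t' < t \<and> t \<le> t' + esz e \<and> g < length p \<and>
      length vs = fst (p ! g) \<and> set vs \<subseteq> G x \<and> eval p vs (snd (p ! g)) v t')"

lemma tail_dec:
  "eval p r e v t \<Longrightarrow> (alpha e = X \<longrightarrow> t \<le> esz e) \<and> (alpha e = T \<longrightarrow> set r \<subseteq> G x \<longrightarrow> tailok p x e v t)"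
  "evals p r es vs t \<Longrightarrow> (\<forall>e\<in>set es. alpha e = X) \<longrightarrow> t \<le> sum_list (map esz es)"
proof (induction rule: eval_evals.inducts)
  case (ev_not r e b t) then show ?case by (auto split: if_splits)
next
  case (ev_null r e b t) then show ?case by (auto split: if_splits)
next
  case (ev_head r e b xs t) then show ?case by (auto split: if_splits)
next
  case (ev_tail r e b xs t) then show ?case by (auto split: if_splits)
next
  case (ev_if_true r e0 t0 e1 v t1 e2)
  show ?case
  proof (intro conjI impI)
    assume "alpha (EIf e0 e1 e2) = X"
    then have "alpha e0 = X" "alpha e1 = X" by (auto simp: tf_max_X split: if_splits)
    then show "t0 + t1 + 1 \<le> esz (EIf e0 e1 e2)" using ev_if_true.IH by simp
  next
    assume a: "alpha (EIf e0 e1 e2) = T" "set r \<subseteq> G x"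
    then have h0: "alpha e0 = X" and h1: "alpha e1 = X \<or> alpha e1 = T"
      using tf_cases by (auto split: if_splits dest!: tf_max_T)
    have t0: "t0 \<le> esz e0" using h0 ev_if_true.IH by simp
    from h1 show "tailok p x (EIf e0 e1 e2) v (t0 + t1 + 1)"
    proof
      assume "alpha e1 = X"
      then have "t1 \<le> esz e1" using ev_if_true.IH by simp
      then show ?thesis using t0 unfolding tailok_def by simp
    next
      assume "alpha e1 = T"
      then have "tailok p x e1 v t1" using ev_if_true.IH a by simp
      then show ?thesis using t0 unfolding tailok_def
        by (elim disjE exE conjE) (simp, (rule disjI2, intro exI conjI, auto)[1])
    qed
  qed
next
  case (ev_if_false r e0 t0 e2 v t2 e1)
  show ?case
  proof (intro conjI impI)
    assume "alpha (EIf e0 e1 e2) = X"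
    then have "alpha e0 = X" "alpha e2 = X" by (auto simp: tf_max_X split: if_splits)
    then show "t0 + t2 + 1 \<le> esz (EIf e0 e1 e2)" using ev_if_false.IH by simp
  next
    assume a: "alpha (EIf e0 e1 e2) = T" "set r \<subseteq> G x"
    then have h0: "alpha e0 = X" and h1: "alpha e2 = X \<or> alpha e2 = T"
      using tf_cases by (auto split: if_splits dest!: tf_max_T)
    have t0: "t0 \<le> esz e0" using h0 ev_if_false.IH by simp
    from h1 show "tailok p x (EIf e0 e1 e2) v (t0 + t2 + 1)"
    proof
      assume "alpha e2 = X"
      then have "t2 \<le> esz e2" using ev_if_false.IH by simp
      then show ?thesis using t0 unfolding tailok_def by simp
    next
      assume "alpha e2 = T"
      then have "tailok p x e2 v t2" using ev_if_false.IH a by simp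
      then show ?thesis using t0 unfolding tailok_def
        by (elim disjE exE conjE) (simp, (rule disjI2, intro exI conjI, auto)[1])
    qed
  qed
next
  case (ev_call f es r vs t1 v t2)
  show ?case
  proof (intro conjI impI)
    assume "alpha (ECall f es) = X"
    then show "t1 + t2 + 1 \<le> esz (ECall f es)" by (simp split: if_splits)
  next
    assume a: "alpha (ECall f es) = T" "set r \<subseteq> G x"
    then have "\<forall>e\<in>set es. alpha e = X" by (simp split: if_splits)
    then have c1: "t1 \<le> sum_list (map esz es)" using ev_call.IH by simp
    have "evals p r es vs t1" using ev_call by blast
    then have c2: "set vs \<subseteq> G x" using eval_good(2) a(2) by blast
    have c3: "f < length p" "length vs = fst (p ! f)" "eval p vs (snd (p ! f)) v t2"
      using ev_call(1,2,5) evals_length[OF ev_call(3)] by simp_all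
    have "t2 < t1 + t2 + 1 \<and> t1 + t2 + 1 \<le> t2 + esz (ECall f es) \<and> f < length p \<and>
      length vs = fst (p ! f) \<and> set vs \<subseteq> G x \<and> eval p vs (snd (p ! f)) v t2"
      using c1 c2 c3 by simp
    then show "tailok p x (ECall f es) v (t1 + t2 + 1)" unfolding tailok_def by blast
  qed
next
  case (evs_cons r e v t es vs ts) then show ?case by auto
qed auto


definition S :: "prog \<Rightarrow> bool list \<Rightarrow> (nat \<times> val list) set" where
  "S p x = (SIGMA g:{..<length p}. {vs. set vs \<subseteq> G x \<and> length vs = fst (p ! g)})"

definition B :: "prog \<Rightarrow> nat" where
  "B p = sum_list (map (esz \<circ> snd) p)"

lemma finite_G: "finite (G x)"
  unfolding G_def by (intro finite_UnI finite_imageI finite_atLeastAtMost) simp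

lemma finite_S: "finite (S p x)"
  unfolding S_def using finite_G by (intro finite_SigmaI finite_lists_length_eq) auto

lemma card_G: "card (G x) \<le> length x + 3"
proof -
  have "card (G x) \<le> card (range VBool) + card ((\<lambda>n. VList (drop n x)) ` {0..length x})"
    unfolding G_def by (rule card_Un_le)
  moreover have "card (range VBool) \<le> 2"
    using card_image_le[of "UNIV::bool set" VBool] by simp
  moreover have "card ((\<lambda>n. VList (drop n x)) ` {0..length x}) \<le> length x + 1"
    using card_image_le[of "{0..length x}" "\<lambda>n. VList (drop n x)"] by simp
  ultimately show ?thesis by linarith
qed

lemma card_S: "card (S p x) \<le> (\<Sum>g<length p. (length x + 3) ^ fst (p ! g))"
proof -
  have "card (S p x) = (\<Sum>g<length p. card (G x) ^ fst (p ! g))"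
    unfolding S_def using finite_G by (simp add: card_lists_length_eq finite_lists_length_eq)
  also have "\<dots> \<le> (\<Sum>g<length p. (length x + 3) ^ fst (p ! g))"
    by (intro sum_mono power_mono card_G) simp
  finally show ?thesis .
qed

lemma esz_le_B: "g < length p \<Longrightarrow> esz (snd (p ! g)) \<le> B p"
  unfolding B_def using elem_le_sum_list[of g "map (esz \<circ> snd) p"] by simp

lemma chain:
  assumes cftr: "CFTR p"
  shows "eval p vs (snd (p ! g)) v t \<Longrightarrow> g < length p \<Longrightarrow> length vs = fst (p ! g) \<Longrightarrow>
    set vs \<subseteq> G x \<Longrightarrow> \<exists>A. A \<subseteq> S p x \<and> t \<le> B p * card A \<and>
      (\<forall>h ws. (h, ws) \<in> A \<longrightarrow> (\<exists>th \<le> t. eval p ws (snd (p ! h)) v th))"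
proof (induction t arbitrary: g vs rule: less_induct)
  case (less t g vs)
  have mem: "(g, vs) \<in> S p x" using less.prems unfolding S_def by auto
  have "p ! g \<in> set p" using less.prems by simp
  then have al: "alpha (snd (p ! g)) = X \<or> alpha (snd (p ! g)) = T"
    using cftr unfolding CFTR_def by auto
  have eB: "esz (snd (p ! g)) \<le> B p" using esz_le_B less.prems by simp
  have "tailok p x (snd (p ! g)) v t"
    using al tail_dec(1)[OF less.prems(1), of x] less.prems(4) unfolding tailok_def by auto
  then show ?case unfolding tailok_def
  proof (elim disjE exE conjE)
    assume "t \<le> esz (snd (p ! g))"
    then show ?thesis using mem eB less.prems(1)
      by (intro exI[of _ "{(g, vs)}"]) auto
  next
    fix g' vs' t'
    assume h: "t' < t" "t \<le> t' + esz (snd (p ! g))" "g' < length p" "length vs' = fst (p ! g')"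
      "set vs' \<subseteq> G x" "eval p vs' (snd (p ! g')) v t'"
    from less.IH[OF h(1) h(6) h(3) h(4) h(5)] obtain A where
      A: "A \<subseteq> S p x" "t' \<le> B p * card A"
         "\<forall>h ws. (h, ws) \<in> A \<longrightarrow> (\<exists>th \<le> t'. eval p ws (snd (p ! h)) v th)" by blast
    have nA: "(g, vs) \<notin> A"
    proof
      assume "(g, vs) \<in> A"
      then obtain th where th: "th \<le> t'" "eval p vs (snd (p ! g)) v th" using A(3) by blast
      have "th = t" using eval_det(1)[OF less.prems(1)] th(2) by blast
      then show False using th(1) h(1) by simp
    qed
    have fA: "finite A" using A(1) finite_S finite_subset by blast
    have "card (insert (g, vs) A) = card A + 1" using nA fA by simp
    then have "t \<le> B p * card (insert (g, vs) A)" using h(2) A(2) eB by simp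
    moreover have "insert (g, vs) A \<subseteq> S p x" using A(1) mem by simp
    moreover have "\<forall>h ws. (h, ws) \<in> insert (g, vs) A \<longrightarrow> (\<exists>th \<le> t. eval p ws (snd (p ! h)) v th)"
    proof (intro allI impI)
      fix h' ws assume "(h', ws) \<in> insert (g, vs) A"
      then consider "(h', ws) = (g, vs)" | "(h', ws) \<in> A" by blast
      then show "\<exists>th \<le> t. eval p ws (snd (p ! h')) v th"
      proof cases
        case 1 then show ?thesis using less.prems(1) by auto
      next
        case 2
        then obtain th where "th \<le> t'" "eval p ws (snd (p ! h')) v th" using A(3) by blast
        then show ?thesis using h(1) by (intro exI[of _ th]) simp
      qed
    qed
    ultimately show ?thesis by blast
  qed
qed

theorem theorem3:
  assumes "CFTR p"
  shows "\<exists>\<pi> :: real poly. \<forall>x v t. run p x v t \<longrightarrow> real t \<le> poly \<pi> (real (length x))"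
proof (intro exI allI impI)
  fix x v t assume r: "run p x v t"
  have wf: "p \<noteq> []" "fst (p ! 0) = 1" using assms unfolding CFTR_def wf_prog_def by auto
  have "set [VList x] \<subseteq> G x" unfolding G_def by (auto intro!: image_eqI[where x=0])
  then obtain A where A: "A \<subseteq> S p x" "t \<le> B p * card A"
    using chain[OF assms, of "[VList x]" 0 v t x] r wf unfolding run_def by auto
  have "card A \<le> card (S p x)" using A(1) finite_S card_mono by blast
  then have "t \<le> B p * (\<Sum>g<length p. (length x + 3) ^ fst (p ! g))"
    using A(2) card_S by (meson le_trans mult_le_mono2)
  then have "real t \<le> real (B p * (\<Sum>g<length p. (length x + 3) ^ fst (p ! g)))"
    by (simp only: of_nat_le_iff)
  also have "\<dots> = poly (smult (real (B p)) (\<Sum>g<length p. [:3, 1:] ^ fst (p ! g))) (real (length x))"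
    by (simp add: poly_sum algebra_simps)
  finally show "real t \<le> poly (smult (real (B p)) (\<Sum>g<length p. [:3, 1:] ^ fst (p ! g))) (real (length x))" .
qed

end
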